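(* Let $p_1=2,p_2,\ldots$ be the consecutive primes, $\chi$ a Dirichlet character, $r\ge1$ an integer and $n\ge1$. Put $\Lambda_r=A_rL(r+1,\chi)L(r+2,\chi)L(r+3,\chi)$ and, for $k\ge1$, \[P_{r,k}=\left(1+\frac{\chi(p_k)}{p_k(p_k^{r+1}-p_k^r-1)}\right)\left(1-\frac{\chi(p_k)}{p_k^{r+2}}\right)\left(1-\frac{\chi(p_k)}{p_k^{r+3}}\right),\qquad E_{r,n}=\prod_{k\ge n+1}P_{r,k}.\] Then \[B_\chi(r)=E_{r,n}\,\Lambda_r\prod_{k=1}^nP_{r,k},\] and, provided that either $r=1$ and $p_{n+1}\ge5$, or $r=2$ and $p_{n+1}\ge3$, \[1-\frac1{p_{n+1}^{r+2}}\le |E_{r,n}|\le 1+\frac1{p_{n+1}^{r+2}}.\]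
   Context: $B_\chi(r)=\prod_p\left(1+\frac{p(\chi(p)-1)}{(p-1)(p^{r+1}-\chi(p))}\right)$ and $A_r=\prod_p\left(1-\frac{1}{p^r(p-1)}\right)$, products over rational primes; $L(s,\chi)=\sum_{n\ge1}\chi(n)n^{-s}=\prod_p(1-\chi(p)p^{-s})^{-1}$ for $\mathrm{Re}(s)>1$. *)

theory Defs
  imports "HOL-Analysis.Analysis" "HOL-Computational_Algebra.Primes"
begin

definition dirichlet_character :: "nat \<Rightarrow> (nat \<Rightarrow> complex) \<Rightarrow> bool" where
  "dirichlet_character q chi \<longleftrightarrow> q > 0 \<and>
     (\<forall>m n. chi (m * n) = chi m * chi n) \<and>
     (\<forall>n. chi (n + q) = chi n) \<and>
     (\<forall>n. chi n \<noteq> 0 \<longleftrightarrow> coprime n q)"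

text \<open>The k-th prime, 1-indexed: nth_prime 1 = 2, nth_prime 2 = 3, ...\<close>
definition nth_prime :: "nat \<Rightarrow> nat" where
  "nth_prime k = enumerate {p::nat. prime p} (k - 1)"

definition prod_primes :: "(nat \<Rightarrow> 'a::{t2_space, comm_semiring_1}) \<Rightarrow> 'a" where
  "prod_primes f = prodinf (\<lambda>k. f (nth_prime (k + 1)))"

definition dirichlet_L :: "real \<Rightarrow> (nat \<Rightarrow> complex) \<Rightarrow> complex" where
  "dirichlet_L s chi = (\<Sum>n. chi (n + 1) / of_real (real (n + 1) powr s))"

definition B_chi :: "(nat \<Rightarrow> complex) \<Rightarrow> nat \<Rightarrow> complex" where
  "B_chi chi r = prod_primes (\<lambda>p. 1 + of_nat p * (chi p - 1) /
      ((of_nat p - 1) * (of_nat p ^ (r + 1) - chi p)))"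

definition A_const :: "nat \<Rightarrow> real" where
  "A_const r = prod_primes (\<lambda>p. 1 - 1 / (real p ^ r * (real p - 1)))"

definition P_factor :: "(nat \<Rightarrow> complex) \<Rightarrow> nat \<Rightarrow> nat \<Rightarrow> complex" where
  "P_factor chi r k = (let p = nth_prime k in
     (1 + chi p / (of_nat p * (of_nat p ^ (r + 1) - of_nat p ^ r - 1))) *
     (1 - chi p / of_nat p ^ (r + 2)) *
     (1 - chi p / of_nat p ^ (r + 3)))"

definition E_tail :: "(nat \<Rightarrow> complex) \<Rightarrow> nat \<Rightarrow> nat \<Rightarrow> complex" where
  "E_tail chi r n = prodinf (\<lambda>j. P_factor chi r (n + 1 + j))"

definition Lambda_const :: "(nat \<Rightarrow> complex) \<Rightarrow> nat \<Rightarrow> complex" where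
  "Lambda_const chi r = of_real (A_const r) * dirichlet_L (real r + 1) chi *
     dirichlet_L (real r + 2) chi * dirichlet_L (real r + 3) chi"

end

theory Submission
  imports Defs
begin

abbreviation "PR \<equiv> {p::nat. prime p}"

lemma primes_inf: "infinite PR" using primes_infinite by simp

lemma nth_prime_Suc: "nth_prime (Suc k) = enumerate PR k"
  unfolding nth_prime_def by simp

lemma enum_prime: "prime (enumerate PR k)"
  using enumerate_in_set[OF primes_inf] by auto

lemma nth_prime_prime: "prime (nth_prime k)"
  unfolding nth_prime_def using enum_prime by simp

lemma enum_ge: "enumerate PR k \<ge> k + 2"
proof (induction k)
  case 0 show ?case using prime_ge_2_nat[OF enum_prime[of 0]] by simp
next
  case (Suc k) then show ?case using enumerate_step[OF primes_inf, of k] by simp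
qed

lemma enum_surj: "prime q \<Longrightarrow> \<exists>k. enumerate PR k = q"
  using enumerate_Ex[OF primes_inf] by auto

lemma enum_inj: "enumerate PR j = enumerate PR k \<longleftrightarrow> j = k"
  using enumerate_mono[OF _ primes_inf] by (metis linorder_neqE_nat order_less_irrefl)

lemma enum_Suc_ge: "enumerate PR (Suc k) \<ge> enumerate PR k + 1"
  using enumerate_step[OF primes_inf, of k] by simp

lemma enum_mono_le: "j \<le> k \<Longrightarrow> enumerate PR j \<le> enumerate PR k"
  using enumerate_mono[OF _ primes_inf] by (metis le_less)

lemma chi_mult: "dirichlet_character q chi \<Longrightarrow> chi (m * n) = chi m * chi n"
  unfolding dirichlet_character_def by blast

lemma chi_one: "dirichlet_character q chi \<Longrightarrow> chi 1 = 1"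
proof -
  assume d: "dirichlet_character q chi"
  have "chi 1 \<noteq> 0" using d unfolding dirichlet_character_def by auto
  moreover have "chi 1 = chi 1 * chi 1" using chi_mult[OF d, of 1 1] by simp
  ultimately show ?thesis by simp
qed

lemma chi_mod: "dirichlet_character q chi \<Longrightarrow> chi n = chi (n mod q)"
proof -
  assume d: "dirichlet_character q chi"
  have per: "chi (a + k * q) = chi a" for a k
  proof (induction k)
    case (Suc k)
    have "chi (a + Suc k * q) = chi ((a + k * q) + q)" by (simp add: algebra_simps)
    also have "\<dots> = chi (a + k * q)" using d unfolding dirichlet_character_def by blast
    finally show ?case using Suc by simp
  qed simp
  have "n = n mod q + (n div q) * q" by simp
  then show ?thesis using per[of "n mod q" "n div q"] by metis
qed

lemma chi_norm_le1: "dirichlet_character q chi \<Longrightarrow> norm (chi n) \<le> 1"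
proof (rule ccontr)
  assume d: "dirichlet_character q chi" and "\<not> norm (chi n) \<le> 1"
  hence gt: "norm (chi n) > 1" by simp
  have q: "q > 0" using d unfolding dirichlet_character_def by auto
  define M where "M = Max ((\<lambda>a. norm (chi a)) ` {..<q})"
  have bd: "norm (chi a) \<le> M" for a
  proof -
    have "norm (chi a) = norm (chi (a mod q))" using chi_mod[OF d] by metis
    also have "\<dots> \<le> M" unfolding M_def using q by (intro Max_ge) auto
    finally show ?thesis .
  qed
  have pw: "chi (n ^ Suc k) = chi n ^ Suc k" for k
    by (induction k) (auto simp: chi_mult[OF d])
  obtain k where "norm (chi n) ^ k > M" using real_arch_pow[OF gt] by blast
  hence "norm (chi n) ^ Suc k > M"
    using gt power_increasing[of k "Suc k" "norm (chi n)"] by linarith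
  moreover have "norm (chi n) ^ Suc k \<le> M" using bd[of "n ^ Suc k"] pw[of k] by (simp add: norm_power norm_mult)
  ultimately show False by simp
qed


definition ef :: "(nat \<Rightarrow> complex) \<Rightarrow> nat \<Rightarrow> nat \<Rightarrow> complex" where
  "ef chi m n = chi n / of_nat n ^ m"

definition SS :: "nat \<Rightarrow> nat set" where
  "SS N = {n. 0 < n \<and> (\<forall>k<N. \<not> enumerate PR k dvd n)}"

definition gg :: "nat \<Rightarrow> nat \<Rightarrow> real" where
  "gg m n = inverse (real n ^ m)"

lemma gg_summable: "m \<ge> 2 \<Longrightarrow> summable (gg m)"
  unfolding gg_def using inverse_power_summable[of m, where 'a=real] by simp

lemma gg_nonneg: "gg m n \<ge> 0" unfolding gg_def by simp

lemma gg_summable_on: "m \<ge> 2 \<Longrightarrow> gg m summable_on A"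
proof -
  assume m: "m \<ge> 2"
  have "summable (\<lambda>n. norm (gg m n))" using gg_summable[OF m] gg_nonneg by simp
  hence "gg m summable_on UNIV" by (rule norm_summable_imp_summable_on)
  thus ?thesis using summable_on_subset_banach by blast
qed

lemma gg_infsum: "m \<ge> 2 \<Longrightarrow> infsum (gg m) UNIV = suminf (gg m)"
proof -
  assume m: "m \<ge> 2"
  have "summable (\<lambda>n. norm (gg m n))" using gg_summable[OF m] gg_nonneg by simp
  moreover have "gg m sums suminf (gg m)" using gg_summable[OF m] by (simp add: summable_sums)
  ultimately have "(gg m has_sum suminf (gg m)) UNIV" by (rule norm_summable_imp_has_sum)
  thus ?thesis by (rule infsumI)
qed

lemma gg_tail: "m \<ge> 2 \<Longrightarrow> (\<lambda>N. infsum (gg m) {N<..}) \<longlonglongrightarrow> 0"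
proof -
  assume m: "m \<ge> 2"
  have eq: "infsum (gg m) {N<..} = suminf (gg m) - sum (gg m) {..N}" for N
  proof -
    have "{N<..} = UNIV - {..N}" by auto
    hence "infsum (gg m) {N<..} = infsum (gg m) UNIV - infsum (gg m) {..N}"
      using infsum_Diff[of "gg m" UNIV "{..N}"] gg_summable_on[OF m] by simp
    thus ?thesis using gg_infsum[OF m] by simp
  qed
  have "(\<lambda>N. suminf (gg m) - sum (gg m) {..N}) \<longlonglongrightarrow> suminf (gg m) - suminf (gg m)"
    by (intro tendsto_diff tendsto_const summable_LIMSEQ' gg_summable[OF m])
  thus ?thesis unfolding eq by simp
qed

context
  fixes q :: nat and chi :: "nat \<Rightarrow> complex" and m :: nat
  assumes d: "dirichlet_character q chi" and m: "m \<ge> 2"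
begin

lemma ef_norm: "norm (ef chi m n) \<le> gg m n"
proof -
  have "norm (ef chi m n) = norm (chi n) / real n ^ m" by (simp add: ef_def norm_divide norm_power)
  also have "\<dots> \<le> 1 / real n ^ m" by (intro divide_right_mono chi_norm_le1[OF d]) simp
  finally show ?thesis by (simp add: gg_def divide_inverse)
qed

lemma ef_mult: "ef chi m (a * b) = ef chi m a * ef chi m b"
  by (simp add: ef_def chi_mult[OF d] power_mult_distrib)

lemma ef_one: "ef chi m 1 = 1"
  unfolding ef_def using chi_one[OF d] by simp

lemma ef_one': "ef chi m (Suc 0) = 1"
  using ef_one by simp

lemma ef_summable_on: "ef chi m summable_on A"
proof -
  have "summable (\<lambda>n. norm (ef chi m n))"
    by (rule summable_comparison_test[OF _ gg_summable[OF m]]) (use ef_norm in auto)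
  hence "ef chi m summable_on UNIV" by (rule norm_summable_imp_summable_on)
  thus ?thesis using summable_on_subset_banach by blast
qed

lemma L_eq: "dirichlet_L (real m) chi = infsum (ef chi m) (SS 0)"
proof -
  have summ: "summable (\<lambda>n. norm (ef chi m n))"
    by (rule summable_comparison_test[OF _ gg_summable[OF m]]) (use ef_norm in auto)
  have "(ef chi m has_sum suminf (ef chi m)) UNIV"
    using norm_summable_imp_has_sum[OF summ] summ summable_norm_cancel summable_sums by blast
  hence I: "infsum (ef chi m) UNIV = suminf (ef chi m)" by (rule infsumI)
  have "SS 0 = UNIV - {0}" unfolding SS_def by auto
  hence I0: "infsum (ef chi m) (SS 0) = infsum (ef chi m) UNIV"
    using infsum_Diff[of "ef chi m" UNIV "{0}"] ef_summable_on m by (simp add: ef_def)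
  have "dirichlet_L (real m) chi = (\<Sum>n. ef chi m (Suc n))"
    unfolding dirichlet_L_def ef_def
    by (intro suminf_cong) (simp add: powr_realpow del: of_nat_Suc)
  also have "\<dots> = suminf (ef chi m) - ef chi m 0"
    by (rule suminf_split_head) (use summ summable_norm_cancel in blast)
  finally show ?thesis using I I0 m by (simp add: ef_def)
qed

lemma SS_image: "(\<lambda>a. enumerate PR N * a) ` SS N = {n \<in> SS N. enumerate PR N dvd n}"
proof -
  let ?p = "enumerate PR N"
  have pp: "prime ?p" by (rule enum_prime)
  show ?thesis
  proof safe
    fix a assume a: "a \<in> SS N"
    show "?p * a \<in> SS N" unfolding SS_def
    proof safe
      show "0 < ?p * a" using a pp prime_gt_0_nat unfolding SS_def by auto
      fix k assume k: "k < N" and dv: "enumerate PR k dvd ?p * a"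
      have pk: "prime (enumerate PR k)" by (rule enum_prime)
      from dv pk have "enumerate PR k dvd ?p \<or> enumerate PR k dvd a" by (simp add: prime_dvd_mult_iff)
      thus False
      proof
        assume "enumerate PR k dvd ?p"
        hence "enumerate PR k = ?p" using pk pp primes_dvd_imp_eq by blast
        thus False using k enum_inj by simp
      next
        assume "enumerate PR k dvd a" thus False using a k unfolding SS_def by auto
      qed
    qed
  next
    fix n assume n: "n \<in> SS N" "?p dvd n"
    then obtain a where a: "n = ?p * a" by blast
    have "a \<in> SS N" unfolding SS_def
    proof safe
      show "0 < a" using n a unfolding SS_def by (cases a) auto
      fix k assume "k < N" "enumerate PR k dvd a"
      thus False using n a unfolding SS_def by auto
    qed
    thus "n \<in> (\<lambda>a. ?p * a) ` SS N" using a by blast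
  qed simp
qed

lemma SS_Suc: "SS (Suc N) = SS N - (\<lambda>a. enumerate PR N * a) ` SS N"
  unfolding SS_image by (auto simp: SS_def less_Suc_eq)

lemma T_step: "infsum (ef chi m) (SS (Suc N)) = infsum (ef chi m) (SS N) * (1 - ef chi m (enumerate PR N))"
proof -
  let ?p = "enumerate PR N"
  have p0: "?p > 0" using enum_prime prime_gt_0_nat by blast
  have sub: "(\<lambda>a. ?p * a) ` SS N \<subseteq> SS N" using SS_image by blast
  have inj: "inj_on (\<lambda>a. ?p * a) (SS N)" using p0 by (auto simp: inj_on_def)
  have "infsum (ef chi m) (SS (Suc N)) = infsum (ef chi m) (SS N) - infsum (ef chi m) ((\<lambda>a. ?p * a) ` SS N)"
    unfolding SS_Suc by (rule infsum_Diff[OF ef_summable_on ef_summable_on sub])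
  also have "infsum (ef chi m) ((\<lambda>a. ?p * a) ` SS N) = infsum (\<lambda>a. ef chi m ?p * ef chi m a) (SS N)"
    using infsum_reindex[OF inj, of "ef chi m"] by (simp add: o_def ef_mult)
  also have "\<dots> = ef chi m ?p * infsum (ef chi m) (SS N)"
    by (rule infsum_cmult_right) (rule ef_summable_on)
  finally show ?thesis by (simp add: algebra_simps)
qed

lemma T_prod: "infsum (ef chi m) (SS N) = dirichlet_L (real m) chi * (\<Prod>k<N. (1 - ef chi m (enumerate PR k)))"
  by (induction N) (simp_all add: L_eq T_step)

lemma SS_sub: "SS N - {1} \<subseteq> {N<..}"
proof
  fix n assume n: "n \<in> SS N - {1}"
  then obtain p where p: "prime p" "p dvd n" using prime_factor_nat by blast
  obtain k where k: "enumerate PR k = p" using enum_surj[OF p(1)] by blast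
  have "\<not> k < N" using n p k unfolding SS_def by auto
  hence "p \<ge> N + 2" using enum_ge[of k] k by simp
  moreover have "p \<le> n" using p n dvd_imp_le unfolding SS_def by auto
  ultimately show "n \<in> {N<..}" by simp
qed

lemma T_bound: "norm (infsum (ef chi m) (SS N) - 1) \<le> infsum (gg m) {N<..}"
proof -
  have nd: "\<And>k. \<not> enumerate PR k dvd 1" using enum_prime not_prime_1 by (metis nat_dvd_1_iff_1)
  have one: "1 \<in> SS N" unfolding SS_def using nd by simp
  have "infsum (ef chi m) (SS N) = infsum (ef chi m) (insert 1 (SS N - {1}))"
    using one by (simp add: insert_absorb)
  also have "\<dots> = 1 + infsum (ef chi m) (SS N - {1})"
    by (subst infsum_insert) (auto simp: ef_summable_on ef_one')
  finally have e: "infsum (ef chi m) (SS N) - 1 = infsum (ef chi m) (SS N - {1})" by simp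
  have "norm (infsum (ef chi m) (SS N - {1})) \<le> infsum (gg m) (SS N - {1})"
    by (rule norm_infsum_le[OF has_sum_infsum[OF ef_summable_on] has_sum_infsum[OF gg_summable_on[OF m]]])
       (rule ef_norm)
  also have "\<dots> \<le> infsum (gg m) {N<..}"
    by (rule infsum_mono2[OF gg_summable_on[OF m] gg_summable_on[OF m] SS_sub]) (rule gg_nonneg)
  finally show ?thesis using e by simp
qed

lemma euler_partial: "dirichlet_L (real m) chi \<noteq> 0 \<and>
   (\<lambda>N. \<Prod>k<N. inverse (1 - ef chi m (enumerate PR k))) \<longlonglongrightarrow> dirichlet_L (real m) chi"
proof -
  let ?L = "dirichlet_L (real m) chi"
  let ?P = "\<lambda>N. \<Prod>k<N. (1 - ef chi m (enumerate PR k))"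
  have lim: "(\<lambda>N. ?L * ?P N) \<longlonglongrightarrow> 1"
  proof -
    have "(\<lambda>N. infsum (ef chi m) (SS N) - 1) \<longlonglongrightarrow> 0"
      by (rule tendsto_norm_zero_cancel, rule Lim_null_comparison[OF _ gg_tail[OF m]])
         (use T_bound in auto)
    hence "(\<lambda>N. infsum (ef chi m) (SS N)) \<longlonglongrightarrow> 1"
      using Lim_null by (simp add: LIM_zero_iff)
    thus ?thesis using T_prod by simp
  qed
  have L0: "?L \<noteq> 0"
  proof
    assume "?L = 0"
    with lim have "(\<lambda>N. 0::complex) \<longlonglongrightarrow> 1" by simp
    thus False using LIMSEQ_unique[OF _ tendsto_const] by fastforce
  qed
  have "(\<lambda>N. inverse (?L * ?P N)) \<longlonglongrightarrow> inverse 1"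
    by (rule tendsto_inverse[OF lim]) simp
  hence "(\<lambda>N. ?L * inverse (?L * ?P N)) \<longlonglongrightarrow> ?L * inverse 1"
    by (intro tendsto_mult tendsto_const)
  moreover have "?L * inverse (?L * ?P N) = (\<Prod>k<N. inverse (1 - ef chi m (enumerate PR k)))" for N
  proof -
    have "?L * inverse (?L * ?P N) = inverse (?P N)" using L0 by (simp add: field_simps)
    also have "\<dots> = (\<Prod>k<N. inverse (1 - ef chi m (enumerate PR k)))"
      using prod_inversef[of "\<lambda>k. 1 - ef chi m (enumerate PR k)" "{..<N}"] by (simp add: o_def)
    finally show ?thesis .
  qed
  ultimately show ?thesis using L0 by simp
qed

end


lemma ident:
 fixes P Q x :: complex
 assumes "P \<noteq> 0" "P - 1 \<noteq> 0" "Q \<noteq> 0" "P*Q - x \<noteq> 0" "P*Q - Q - 1 \<noteq> 0"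
   "P*P*Q - x \<noteq> 0" "P*P*P*Q - x \<noteq> 0"
 shows "1 + P*(x-1)/((P-1)*(P*Q - x)) = (1 - 1/(Q*(P-1))) * ((1 + x/(P*(P*Q - Q - 1))) * (1 - x/(P*P*Q)) * (1 - x/(P*P*P*Q))) * inverse(1 - x/(P*Q)) * inverse(1 - x/(P*P*Q)) * inverse(1 - x/(P*P*P*Q))"
proof -
  have n1: "1 - x/(P*Q) \<noteq> 0" using assms by (simp add: field_simps)
  have n2: "1 - x/(P*P*Q) \<noteq> 0" using assms by (simp add: field_simps)
  have n3: "1 - x/(P*P*P*Q) \<noteq> 0" using assms by (simp add: field_simps)
  have L: "1 + P*(x-1)/((P-1)*(P*Q - x)) = (P*P*Q - P*Q - P + x)/((P-1)*(P*Q - x))"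
  proof -
    have D: "(P-1)*(P*Q - x) \<noteq> 0" using assms by simp
    have "1 + P*(x-1)/((P-1)*(P*Q - x)) = (1*((P-1)*(P*Q - x)) + P*(x-1))/((P-1)*(P*Q - x))"
      by (rule add_divide_eq_iff[OF D])
    also have "1*((P-1)*(P*Q - x)) + P*(x-1) = P*P*Q - P*Q - P + x" by (simp add: algebra_simps)
    finally show ?thesis .
  qed
  have a: "1 - 1/(Q*(P-1)) = (Q*(P-1) - 1)/(Q*(P-1))" using assms by (simp add: field_simps)
  have b: "1 + x/(P*(P*Q - Q - 1)) = (P*(P*Q - Q - 1) + x)/(P*(P*Q - Q - 1))"
    using assms by (subst add_divide_eq_iff) simp_all
  have c: "inverse (1 - x/(P*Q)) = (P*Q)/(P*Q - x)" using assms by (simp add: field_simps)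
  have R: "(1 - 1/(Q*(P-1))) * (1 + x/(P*(P*Q - Q - 1))) * inverse(1 - x/(P*Q))
     = (P*P*Q - P*Q - P + x)/((P-1)*(P*Q - x))"
  proof -
    have D1: "Q*(P-1) \<noteq> 0" "P*(P*Q - Q - 1) \<noteq> 0" "P*Q - x \<noteq> 0" "(P-1)*(P*Q - x) \<noteq> 0"
      using assms by simp_all
    have "(1 - 1/(Q*(P-1))) * (1 + x/(P*(P*Q - Q - 1))) * inverse(1 - x/(P*Q)) =
      ((Q*(P-1) - 1) * (P*(P*Q - Q - 1) + x) * (P*Q)) / ((Q*(P-1)) * (P*(P*Q - Q - 1)) * (P*Q - x))"
      unfolding a b c by simp
    also have "\<dots> = (P*P*Q - P*Q - P + x)/((P-1)*(P*Q - x))"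
      using D1 by (subst frac_eq_eq) (simp_all, algebra)
    finally show ?thesis .
  qed
  have "(1 - 1/(Q*(P-1))) * ((1 + x/(P*(P*Q - Q - 1))) * (1 - x/(P*P*Q)) * (1 - x/(P*P*P*Q))) * inverse(1 - x/(P*Q)) * inverse(1 - x/(P*P*Q)) * inverse(1 - x/(P*P*P*Q))
     = ((1 - 1/(Q*(P-1))) * (1 + x/(P*(P*Q - Q - 1))) * inverse(1 - x/(P*Q))) * ((1 - x/(P*P*Q)) * inverse(1 - x/(P*P*Q))) * ((1 - x/(P*P*P*Q)) * inverse(1 - x/(P*P*P*Q)))"
    by (simp only: ac_simps)
  also have "\<dots> = (1 - 1/(Q*(P-1))) * (1 + x/(P*(P*Q - Q - 1))) * inverse(1 - x/(P*Q))"
    using n2 n3 by simp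
  finally show ?thesis using L R by simp
qed

definition aF :: "nat \<Rightarrow> nat \<Rightarrow> real" where
  "aF r p = 1 - 1 / (real p ^ r * (real p - 1))"
definition bF :: "(nat \<Rightarrow> complex) \<Rightarrow> nat \<Rightarrow> nat \<Rightarrow> complex" where
  "bF chi r p = 1 + of_nat p * (chi p - 1) / ((of_nat p - 1) * (of_nat p ^ (r + 1) - chi p))"
definition PF :: "(nat \<Rightarrow> complex) \<Rightarrow> nat \<Rightarrow> nat \<Rightarrow> complex" where
  "PF chi r p = (1 + chi p / (of_nat p * (of_nat p ^ (r + 1) - of_nat p ^ r - 1))) *
     (1 - chi p / of_nat p ^ (r + 2)) * (1 - chi p / of_nat p ^ (r + 3))"

lemma B_chi_eq: "B_chi chi r = prodinf (\<lambda>k. bF chi r (enumerate PR k))"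
  unfolding B_chi_def prod_primes_def bF_def by (simp add: nth_prime_Suc)
lemma A_eq: "A_const r = prodinf (\<lambda>k. aF r (enumerate PR k))"
  unfolding A_const_def prod_primes_def aF_def by (simp add: nth_prime_Suc)
lemma P_eq: "P_factor chi r k = PF chi r (nth_prime k)"
  by (simp add: P_factor_def PF_def Let_def)

lemma ne_of_norm: "norm (x::complex) \<le> 1 \<Longrightarrow> 1 < norm y \<Longrightarrow> y - x \<noteq> 0"
  by auto

lemma pow_ge: "(p::nat) \<ge> 2 \<Longrightarrow> r \<ge> 1 \<Longrightarrow> real p ^ r \<ge> real p"
  using self_le_power[of "real p" r] by simp

lemma D_ge: assumes "(p::nat) \<ge> 2" "r \<ge> 1"
  shows "real p * real p ^ r - real p ^ r - 1 \<ge> real p / 2"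
proof -
  have Q: "real p ^ r \<ge> real p" using pow_ge assms by blast
  have "real p * real p ^ r - real p ^ r - 1 = real p ^ r * (real p - 1) - 1" by (simp add: algebra_simps)
  also have "real p ^ r * (real p - 1) \<ge> real p * (real p - 1)"
    using Q assms by (intro mult_right_mono) auto
  moreover have "real p * (real p - 1) - 1 \<ge> real p / 2"
  proof -
    have "real p \<ge> 2" using assms by simp
    moreover hence "real p * real p \<ge> 2 * real p" by (intro mult_right_mono) auto
    moreover have "real p * (real p - 1) - 1 = real p * real p - real p - 1" by (simp add: algebra_simps)
    ultimately show ?thesis by linarith
  qed
  ultimately show ?thesis by linarith
qed

lemma prod3_bound:
  fixes a b c :: complex
  assumes "norm a \<le> t" "norm b \<le> t" "norm c \<le> t" "t \<le> 1"
  shows "norm ((1 + a) * (1 + b) * (1 + c) - 1) \<le> 7 * t"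
proof -
  have t0: "t \<ge> 0" using assms(1) norm_ge_zero order_trans by blast
  have e: "(1 + a) * (1 + b) * (1 + c) - 1 = a + b * (1 + a) + c * ((1 + a) * (1 + b))"
    by (simp add: algebra_simps)
  have na: "norm (1 + a) \<le> 2" using norm_triangle_ineq[of 1 a] assms by simp
  have nb: "norm (1 + b) \<le> 2" using norm_triangle_ineq[of 1 b] assms by simp
  have "norm (b * (1 + a)) \<le> t * 2" unfolding norm_mult using assms na t0 by (intro mult_mono) auto
  moreover have "norm (c * ((1 + a) * (1 + b))) \<le> t * (2 * 2)" unfolding norm_mult
    using assms na nb t0 by (intro mult_mono) auto
  ultimately have "norm (a + b * (1 + a) + c * ((1 + a) * (1 + b))) \<le> t + t * 2 + t * (2 * 2)"
    using assms(1) norm_triangle_ineq order_trans by (smt (verit, ccfv_SIG))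
  thus ?thesis unfolding e by simp
qed


lemma gg2_summable: "summable (\<lambda>k. c * gg 2 (Suc k))"
  using gg_summable[of 2] by (intro summable_mult) (simp add: summable_Suc_iff)

lemma enum_ge_real: "real (enumerate PR k) \<ge> real k + 2"
  using enum_ge[of k] by simp

lemma sq_bound: assumes "real p \<ge> real k + 2"
  shows "1 / real p ^ 2 \<le> gg 2 (Suc k)"
proof -
  have "real (Suc k) ^ 2 \<le> real p ^ 2" using assms by (intro power_mono) auto
  moreover have "real (Suc k) ^ 2 > 0" by simp
  ultimately show ?thesis unfolding gg_def by (simp add: divide_inverse le_imp_inverse_le)
qed

context
  fixes q :: nat and chi :: "nat \<Rightarrow> complex" and r :: nat
  assumes d: "dirichlet_character q chi" and r: "r \<ge> 1"
begin

lemma bF_ident: assumes p: "p \<ge> 2"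
  shows "bF chi r p = of_real (aF r p) * PF chi r p * inverse (1 - ef chi (r+1) p) *
     inverse (1 - ef chi (r+2) p) * inverse (1 - ef chi (r+3) p)"
proof -
  define P :: complex where "P = of_nat p"
  define Q :: complex where "Q = P ^ r"
  define x where "x = chi p"
  have x1: "norm x \<le> 1" using chi_norm_le1[OF d] x_def by simp
  have Qge: "real p ^ r \<ge> real p" using pow_ge p r by blast
  have rp: "real p \<ge> 2" using p by simp
  have nPQ: "norm (P*Q) = real p * real p ^ r" by (simp add: P_def Q_def norm_mult norm_power)
  have pq4: "real p * real p ^ r \<ge> 2 * 2" using rp Qge mult_mono[of 2 "real p" 2 "real p ^ r"] by linarith
  have h1: "P ^ (r+1) = P*Q" by (simp add: Q_def)
  have h2: "P ^ (r+2) = P*P*Q" by (simp add: Q_def eval_nat_numeral)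
  have h3: "P ^ (r+3) = P*P*P*Q" by (simp add: Q_def eval_nat_numeral)
  have ha: "complex_of_real (aF r p) = 1 - 1/(Q*(P-1))" by (simp add: aF_def P_def Q_def)
  have n1: "P \<noteq> 0" "P - 1 \<noteq> 0" "Q \<noteq> 0" using p by (auto simp: P_def Q_def)
  have n2: "P*Q - x \<noteq> 0" using x1 nPQ pq4 by (intro ne_of_norm) auto
  have n3: "P*P*Q - x \<noteq> 0"
  proof (rule ne_of_norm[OF x1])
    have "norm (P*P*Q) = real p * (real p * real p ^ r)" by (simp add: P_def Q_def norm_mult norm_power)
    also have "\<dots> \<ge> 2 * 4" using rp pq4 by (intro mult_mono) auto
    finally show "1 < norm (P*P*Q)" by simp
  qed
  have n4: "P*P*P*Q - x \<noteq> 0"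
  proof (rule ne_of_norm[OF x1])
    have "norm (P*P*P*Q) = real p * (real p * (real p * real p ^ r))" by (simp add: P_def Q_def norm_mult norm_power)
    also have "\<dots> \<ge> 2 * (2 * 4)" using rp pq4 by (intro mult_mono) auto
    finally show "1 < norm (P*P*P*Q)" by simp
  qed
  have n5: "P*Q - Q - 1 \<noteq> 0"
  proof -
    have "P*Q - Q - 1 = of_real (real p * real p ^ r - real p ^ r - 1)" by (simp add: P_def Q_def)
    moreover have "real p * real p ^ r - real p ^ r - 1 \<ge> real p / 2" by (rule D_ge[OF p r])
    ultimately show ?thesis using rp by (auto simp del: of_real_diff)
  qed
  show ?thesis
    apply (unfold bF_def PF_def ef_def ha)
    apply (unfold P_def[symmetric] x_def[symmetric])
    apply (unfold h1 h2 h3)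
    apply (unfold Q_def[symmetric])
    by (rule ident[OF n1 n2 n5 n3 n4])
qed


lemma aF_props: assumes p: "p \<ge> 2" and pk: "real p \<ge> real k + 2"
  shows "\<bar>aF r p - 1\<bar> \<le> gg 2 (Suc k) \<and> aF r p \<ge> 1/2"
proof -
  define D where "D = real p ^ r * (real p - 1)"
  have rp: "real p \<ge> 2" using p by simp
  have Qge: "real p ^ r \<ge> real p" using pow_ge p r by blast
  have D1: "D \<ge> real p * (real p - 1)" unfolding D_def using Qge rp by (intro mult_right_mono) auto
  have D2: "real p * (real p - 1) \<ge> 2" using rp mult_mono[of 2 "real p" 1 "real p - 1"] by linarith
  have D3: "real p * (real p - 1) \<ge> real (Suc k) ^ 2"
  proof -
    have "real (Suc k) ^ 2 = (real k + 1) * (real k + 1)" by (simp add: power2_eq_square algebra_simps)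
    also have "\<dots> \<le> real p * (real p - 1)" using pk by (intro mult_mono) auto
    finally show ?thesis .
  qed
  have Dpos: "D > 0" using D1 D2 by linarith
  have e: "aF r p - 1 = - (1 / D)" unfolding aF_def D_def by simp
  have "inverse D \<le> inverse (real (Suc k) ^ 2)"
    by (rule le_imp_inverse_le) (use D1 D3 in linarith, simp)
  hence "1 / D \<le> gg 2 (Suc k)" unfolding gg_def by (simp add: divide_inverse)
  moreover have "inverse D \<le> inverse 2"
    by (rule le_imp_inverse_le) (use D1 D2 in linarith, simp)
  hence "1 / D \<le> 1/2" by (simp add: inverse_eq_divide)
  moreover have "1 / D \<ge> 0" using Dpos by simp
  ultimately show ?thesis using e by auto
qed

lemma one_plus_ne: "norm (a::complex) < 1 \<Longrightarrow> 1 + a \<noteq> 0"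
proof
  assume "norm a < 1" "1 + a = 0"
  hence "a = -1" by (simp add: add_eq_0_iff)
  thus False using \<open>norm a < 1\<close> by simp
qed

lemma PF_props: assumes p: "p \<ge> 2" and pk: "real p \<ge> real k + 2"
  shows "norm (PF chi r p - 1) \<le> 14 * gg 2 (Suc k) \<and> PF chi r p \<noteq> 0"
proof -
  define Dr where "Dr = real p * real p ^ r - real p ^ r - 1"
  have rp: "real p \<ge> 2" using p by simp
  have Dr: "Dr \<ge> real p / 2" unfolding Dr_def by (rule D_ge[OF p r])
  have x1: "norm (chi p) \<le> 1" by (rule chi_norm_le1[OF d])
  define a where "a = chi p / (of_nat p * (of_nat p ^ (r + 1) - of_nat p ^ r - 1))"
  define b where "b = - (chi p / of_nat p ^ (r + 2))"
  define c where "c = - (chi p / of_nat p ^ (r + 3))"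
  define t where "t = 2 / real p ^ 2"
  have e: "PF chi r p = (1 + a) * (1 + b) * (1 + c)" unfolding PF_def a_def b_def c_def by simp
  have p2: "real p ^ 2 \<ge> 4" using rp power_mono[of 2 "real p" 2] by simp
  have t1: "t \<le> 1/2" unfolding t_def using p2 by (simp add: divide_simps)
  have na: "norm a \<le> t"
  proof -
    have "(of_nat p ^ (r + 1) - of_nat p ^ r - 1 :: complex) = of_real Dr" by (simp add: Dr_def)
    hence "norm a = norm (chi p) / (real p * Dr)" unfolding a_def using Dr rp
      by (simp add: norm_divide norm_mult)
    also have "\<dots> \<le> 1 / (real p * (real p / 2))" using x1 Dr rp
      by (intro frac_le mult_left_mono mult_pos_pos) auto
    also have "\<dots> = t" unfolding t_def by (simp add: power2_eq_square)
    finally show ?thesis .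
  qed
  have pw: "real p ^ 2 \<le> real p ^ (r + j)" if "j \<ge> 2" for j
    using rp that by (intro power_increasing) auto
  have nb: "norm b \<le> t"
  proof -
    have "norm b = norm (chi p) / real p ^ (r + 2)" unfolding b_def by (simp add: norm_divide norm_power norm_mult)
    also have "\<dots> \<le> 1 / real p ^ 2" using x1 pw[of 2] p2 rp by (intro frac_le) auto
    also have "\<dots> \<le> t" unfolding t_def by (simp add: divide_right_mono)
    finally show ?thesis .
  qed
  have nc: "norm c \<le> t"
  proof -
    have "norm c = norm (chi p) / real p ^ (r + 3)" unfolding c_def by (simp add: norm_divide norm_power norm_mult)
    also have "\<dots> \<le> 1 / real p ^ 2" using x1 pw[of 3] p2 rp by (intro frac_le) auto
    also have "\<dots> \<le> t" unfolding t_def by (simp add: divide_right_mono)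
    finally show ?thesis .
  qed
  have "norm (PF chi r p - 1) \<le> 7 * t" unfolding e using na nb nc t1 by (intro prod3_bound) auto
  also have "7 * t = 14 * (1 / real p ^ 2)" unfolding t_def by simp
  also have "\<dots> \<le> 14 * gg 2 (Suc k)" using sq_bound[OF pk] by simp
  finally have B: "norm (PF chi r p - 1) \<le> 14 * gg 2 (Suc k)" .
  have "1 + a \<noteq> 0" "1 + b \<noteq> 0" "1 + c \<noteq> 0" using na nb nc t1
    by (intro one_plus_ne; linarith)+
  hence "PF chi r p \<noteq> 0" unfolding e by simp
  with B show ?thesis by blast
qed

lemma A_hasprod: "(\<lambda>k. aF r (enumerate PR k)) has_prod A_const r \<and> A_const r \<noteq> 0"
proof -
  have pr: "enumerate PR k \<ge> 2" "real (enumerate PR k) \<ge> real k + 2" for k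
    using enum_ge[of k] by auto
  define z where "z k = aF r (enumerate PR k) - 1" for k
  have "summable (\<lambda>k. \<bar>z k\<bar>)"
    by (rule summable_comparison_test[OF _ gg2_summable[of 1]])
       (use aF_props[OF pr] in \<open>auto simp: z_def\<close>)
  moreover have "z k \<noteq> -1" for k using aF_props[OF pr, of k] unfolding z_def by auto
  ultimately have "convergent_prod (\<lambda>k. 1 + z k)" by (rule summable_imp_convergent_prod_real)
  hence cp: "convergent_prod (\<lambda>k. aF r (enumerate PR k))" unfolding z_def by simp
  have nz: "aF r (enumerate PR k) \<noteq> 0" for k using aF_props[OF pr, of k] by auto
  have h: "(\<lambda>k. aF r (enumerate PR k)) has_prod prodinf (\<lambda>k. aF r (enumerate PR k))"
    using cp by (simp only: convergent_prod_has_prod_iff)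
  show ?thesis unfolding A_eq by (intro conjI h prodinf_nonzero[OF cp nz])
qed

lemma P_hasprod: "(\<lambda>k. PF chi r (enumerate PR k)) has_prod prodinf (\<lambda>k. PF chi r (enumerate PR k))
    \<and> prodinf (\<lambda>k. PF chi r (enumerate PR k)) \<noteq> 0 \<and> (\<forall>k. PF chi r (enumerate PR k) \<noteq> 0)"
proof -
  have pr: "enumerate PR k \<ge> 2" "real (enumerate PR k) \<ge> real k + 2" for k
    using enum_ge[of k] by auto
  define z where "z k = PF chi r (enumerate PR k) - 1" for k
  have S: "summable (\<lambda>k. norm (z k))"
    by (rule summable_comparison_test[OF _ gg2_summable[of 14]])
       (use PF_props[OF pr] in \<open>auto simp: z_def\<close>)
  have nz: "PF chi r (enumerate PR k) \<noteq> 0" for k using PF_props[OF pr, of k] by auto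
  have Z: "z k \<noteq> -1" for k
  proof
    assume "z k = -1"
    hence "PF chi r (enumerate PR k) = 0" unfolding z_def by (simp add: algebra_simps)
    with nz show False by blast
  qed
  have "convergent_prod (\<lambda>k. 1 + z k)" by (rule summable_imp_convergent_prod_complex[OF S Z])
  hence cp: "convergent_prod (\<lambda>k. PF chi r (enumerate PR k))" unfolding z_def by simp
  have h: "(\<lambda>k. PF chi r (enumerate PR k)) has_prod prodinf (\<lambda>k. PF chi r (enumerate PR k))"
    using cp by (simp only: convergent_prod_has_prod_iff)
  have h2: "prodinf (\<lambda>k. PF chi r (enumerate PR k)) \<noteq> 0" by (rule prodinf_nonzero[OF cp nz])
  show ?thesis using h h2 nz by blast
qed

end


context
  fixes q :: nat and chi :: "nat \<Rightarrow> complex" and r :: nat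
  assumes d: "dirichlet_character q chi" and r: "r \<ge> 1"
begin

lemma euler_hasprod: assumes m: "m \<ge> 2"
  shows "(\<lambda>k. inverse (1 - ef chi m (enumerate PR k))) has_prod dirichlet_L (real m) chi"
proof -
  note E = euler_partial[OF d m]
  have "(\<lambda>n. \<Prod>k<Suc n. inverse (1 - ef chi m (enumerate PR k))) \<longlonglongrightarrow> dirichlet_L (real m) chi"
    using LIMSEQ_Suc[OF E[THEN conjunct2]] .
  hence "raw_has_prod (\<lambda>k. inverse (1 - ef chi m (enumerate PR k))) 0 (dirichlet_L (real m) chi)"
    unfolding raw_has_prod_def using E by (simp add: lessThan_Suc_atMost)
  thus ?thesis unfolding has_prod_def by blast
qed

lemma part1: "B_chi chi r = prodinf (\<lambda>k. PF chi r (enumerate PR k)) * Lambda_const chi r"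
proof -
  let ?p = "\<lambda>k. enumerate PR k"
  let ?e = "\<lambda>m k. inverse (1 - ef chi m (?p k))"
  have ge: "?p k \<ge> 2" for k using enum_ge[of k] by simp
  have a: "(\<lambda>k. complex_of_real (aF r (?p k))) has_prod complex_of_real (A_const r)"
    using A_hasprod[OF d r] by simp
  have P: "(\<lambda>k. PF chi r (?p k)) has_prod prodinf (\<lambda>k. PF chi r (?p k))"
    using P_hasprod[OF d r] by blast
  have e1: "?e (r+1) has_prod dirichlet_L (real (r+1)) chi" by (rule euler_hasprod) (use r in simp)
  have e2: "?e (r+2) has_prod dirichlet_L (real (r+2)) chi" by (rule euler_hasprod) (use r in simp)
  have e3: "?e (r+3) has_prod dirichlet_L (real (r+3)) chi" by (rule euler_hasprod) (use r in simp)
  have all: "(\<lambda>k. complex_of_real (aF r (?p k)) * PF chi r (?p k) * ?e (r+1) k * ?e (r+2) k * ?e (r+3) k)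
     has_prod (complex_of_real (A_const r) * prodinf (\<lambda>k. PF chi r (?p k)) * dirichlet_L (real (r+1)) chi
        * dirichlet_L (real (r+2)) chi * dirichlet_L (real (r+3)) chi)"
    by (intro has_prod_mult a P e1 e2 e3)
  have eq: "(\<lambda>k. bF chi r (?p k)) = (\<lambda>k. complex_of_real (aF r (?p k)) * PF chi r (?p k) * ?e (r+1) k * ?e (r+2) k * ?e (r+3) k)"
    using bF_ident[OF d r ge] by simp
  have "B_chi chi r = complex_of_real (A_const r) * prodinf (\<lambda>k. PF chi r (?p k)) * dirichlet_L (real (r+1)) chi
        * dirichlet_L (real (r+2)) chi * dirichlet_L (real (r+3)) chi"
    unfolding B_chi_eq eq using all by (rule has_prod_unique[symmetric])
  thus ?thesis unfolding Lambda_const_def by (simp add: ac_simps)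
qed

lemma part1': "B_chi chi r = E_tail chi r n * Lambda_const chi r * (\<Prod>k=1..n. P_factor chi r k)"
proof -
  let ?f = "\<lambda>k. PF chi r (enumerate PR k)"
  have cp: "convergent_prod ?f" using P_hasprod[OF d r] has_prod_iff by blast
  have nz: "?f i \<noteq> 0" for i using P_hasprod[OF d r] by blast
  have split: "prodinf ?f = (\<Prod>i. ?f (i + n)) * (\<Prod>i<n. ?f i)"
    by (rule prodinf_split_initial_segment[OF cp nz])
  have Et: "E_tail chi r n = (\<Prod>i. ?f (i + n))"
    unfolding E_tail_def P_eq by (simp add: nth_prime_Suc[symmetric] ac_simps)
  have Pr: "(\<Prod>k=1..n. P_factor chi r k) = (\<Prod>i<n. ?f i)"
    unfolding P_eq by (simp add: prod.atLeast1_atMost_eq nth_prime_Suc)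
  show ?thesis using part1 split Et Pr by (simp add: ac_simps)
qed

end


lemma sharp_real:
  fixes p Q D :: real
  assumes p: "p \<ge> 2" and Q: "Q \<ge> 2" and D: "D = p*Q - Q - 1" and Dpos: "D > 0"
    and H: "(Q + p + 4)/D + 1/(p*p*Q) \<le> 1"
  shows "\<bar>1/(p*D) - 1/(p*p*Q) - 1/(p*p*p*Q)\<bar> + 1/(p*D)*(1/(p*p*Q)) + 1/(p*D)*(1/(p*p*p*Q))
     + 1/(p*p*Q)*(1/(p*p*p*Q)) + 1/(p*D)*(1/(p*p*Q))*(1/(p*p*p*Q)) \<le> 1/(p*p*p*Q)"
proof -
  define K where "K = p*p*p*Q"
  have p0: "p > 0" and Q0: "Q > 0" using p Q by auto
  have K0: "K > 0" unfolding K_def using p0 Q0 by simp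
  have h1: "1/(p*D) - 1/(p*p*Q) - 1/(p*p*p*Q) = (Q + p + 1)/(K*D)"
  proof -
    have "1/(p*D) - 1/(p*p*Q) - 1/(p*p*p*Q) = (p*p*Q - p*D - D)/(K*D)"
      unfolding K_def using p0 Q0 Dpos by (simp add: field_simps)
    also have "p*p*Q - p*D - D = Q + p + 1" unfolding D by (simp add: algebra_simps)
    finally show ?thesis .
  qed
  have h1': "\<bar>1/(p*D) - 1/(p*p*Q) - 1/(p*p*p*Q)\<bar> = (Q + p + 1)/(K*D)"
    unfolding h1 using K0 Dpos Q0 p0 by simp
  have h2: "1/(p*D)*(1/(p*p*Q)) = 1/(K*D)" unfolding K_def by simp
  have h3: "1/(p*D)*(1/(p*p*p*Q)) \<le> 1/(K*D)"
  proof -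
    have "1/(p*D)*(1/(p*p*p*Q)) = (1/(K*D)) * (1/p)" unfolding K_def by simp
    also have "\<dots> \<le> 1/(K*D) * 1" using K0 Dpos p by (intro mult_left_mono) auto
    finally show ?thesis by simp
  qed
  have h4: "1/(p*p*Q)*(1/(p*p*p*Q)) = (1/(p*p*Q))/K" unfolding K_def by simp
  have h5: "1/(K*D)*(1/(p*p*p*Q)) \<le> 1/(K*D)"
  proof -
    have a1: "p*p \<ge> 2*2" using p by (intro mult_mono) auto
    have a2: "p*p*p \<ge> (2*2)*2" by (rule mult_mono[OF a1 p]) auto
    have a3: "p*p*p*Q \<ge> ((2*2)*2)*2" by (rule mult_mono[OF a2 Q]) (use p in auto)
    have "1/(p*p*p*Q) \<le> 1" using a3 by simp
    hence "1/(K*D) * (1/(p*p*p*Q)) \<le> 1/(K*D) * 1" using K0 Dpos by (intro mult_left_mono) auto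
    thus ?thesis by simp
  qed
  have "\<bar>1/(p*D) - 1/(p*p*Q) - 1/(p*p*p*Q)\<bar> + 1/(p*D)*(1/(p*p*Q)) + 1/(p*D)*(1/(p*p*p*Q))
     + 1/(p*p*Q)*(1/(p*p*p*Q)) + 1/(p*D)*(1/(p*p*Q))*(1/(p*p*p*Q))
     \<le> (Q + p + 1)/(K*D) + 1/(K*D) + 1/(K*D) + (1/(p*p*Q))/K + 1/(K*D)"
    unfolding h1' h2 h4 using h3 h5 by linarith
  also have "\<dots> = ((Q + p + 4)/D + 1/(p*p*Q)) / K" using K0 Dpos by (simp add: field_simps)
  also have "\<dots> \<le> 1 / K" using H K0 by (intro divide_right_mono) auto
  finally show ?thesis unfolding K_def .
qed

lemma H_r1: fixes p :: real assumes "p \<ge> 5"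
  shows "(p + p + 4)/(p*p - p - 1) + 1/(p*p*p) \<le> 1"
proof -
  have pp: "p*p \<ge> 5*p" using assms by (intro mult_right_mono) auto
  have D: "p*p - p - 1 > 0" using pp assms by linarith
  have a: "(p + p + 4)/(p*p - p - 1) \<le> 124/125"
  proof -
    have "124/125*(p*p-p-1) = 124/125*(p*p) - 124/125*p - 124/125" by (simp only: right_diff_distrib mult_1_right)
    thus ?thesis unfolding pos_divide_le_eq[OF D] using pp assms by linarith
  qed
  have ppp: "p*p*p \<ge> 125"
  proof -
    have "p*p \<ge> 25" using pp assms by linarith
    hence "p*p*p \<ge> 25*5" using assms by (intro mult_mono) auto
    thus ?thesis by simp
  qed
  have b: "1/(p*p*p) \<le> 1/125" using ppp by (intro divide_left_mono) auto
  show ?thesis using a b by linarith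
qed

lemma H_r2: fixes p :: real assumes "p \<ge> 3"
  shows "(p*p + p + 4)/(p*(p*p) - p*p - 1) + 1/(p*p*(p*p)) \<le> 1"
proof -
  have pp: "p*p \<ge> 3*p" using assms by (intro mult_right_mono) auto
  have ppp: "p*(p*p) \<ge> 3*(p*p)" using assms by (intro mult_right_mono) auto
  have D: "p*(p*p) - p*p - 1 > 0" using pp ppp assms by linarith
  have a: "(p*p + p + 4)/(p*(p*p) - p*p - 1) \<le> 80/81"
  proof -
    have "80/81*(p*(p*p) - p*p - 1) = 80/81*(p*(p*p)) - 80/81*(p*p) - 80/81" by (simp only: right_diff_distrib mult_1_right)
    thus ?thesis unfolding pos_divide_le_eq[OF D] using pp ppp assms by linarith
  qed
  have p4: "p*p*(p*p) \<ge> 81"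
  proof -
    have "p*p \<ge> 9" using pp assms by linarith
    hence "p*p*(p*p) \<ge> 9*9" by (intro mult_mono) auto
    thus ?thesis by simp
  qed
  have b: "1/(p*p*(p*p)) \<le> 1/81" using p4 by (intro divide_left_mono) auto
  show ?thesis using a b by linarith
qed

lemma tele_gen: fixes p A B :: real
  assumes p: "p > 0" and A: "A > 0" and B: "B > 0" and H: "(p-2)*B \<ge> p*A"
  shows "1/(p*A) \<le> 1/(2*A) - 1/(2*B)"
proof -
  have e: "1/(2*A) - 1/(2*B) - 1/(p*A) = ((p-2)*B - p*A)/(2*p*A*B)"
    using p A B by (simp add: field_simps)
  have "((p-2)*B - p*A)/(2*p*A*B) \<ge> 0" using p A B H by (intro divide_nonneg_pos) auto
  thus ?thesis using e by linarith
qed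

lemma tele_r1: fixes p :: real assumes "p \<ge> 5"
  shows "1/p^4 \<le> 1/(2*p^3) - 1/(2*(p+1)^3)"
proof -
  have pp: "p*p \<ge> 5*p" using assms by (intro mult_right_mono) auto
  have ppp: "p*(p*p) \<ge> 5*(p*p)" using assms by (intro mult_right_mono) auto
  have poly: "(p-2)*(p+1)^3 - p*p^3 = p*(p*p) - 3*(p*p) - 5*p - 2"
    by (simp add: algebra_simps power2_eq_square power3_eq_cube eval_nat_numeral)
  have pos: "(p-2)*(p+1)^3 \<ge> p*p^3" using poly pp ppp assms by linarith
  have p0: "p > 0" using assms by simp
  have "1/(p*p^3) \<le> 1/(2*p^3) - 1/(2*(p+1)^3)" by (rule tele_gen[OF p0 _ _ pos]) (use p0 in auto)
  thus ?thesis by (simp add: eval_nat_numeral)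
qed

lemma tele_r2: fixes p :: real assumes "p \<ge> 3"
  shows "1/p^5 \<le> 1/(2*p^4) - 1/(2*(p+1)^4)"
proof -
  have pp: "p*p \<ge> 3*p" using assms by (intro mult_right_mono) auto
  have ppp: "p*(p*p) \<ge> 3*(p*p)" using assms by (intro mult_right_mono) auto
  have p4: "p*(p*(p*p)) \<ge> 3*(p*(p*p))" using assms by (intro mult_right_mono) auto
  have poly: "(p-2)*(p+1)^4 - p*p^4 = 2*(p*(p*(p*p))) - 2*(p*(p*p)) - 8*(p*p) - 7*p - 2"
    by (simp add: algebra_simps power2_eq_square power3_eq_cube eval_nat_numeral)
  have pos: "(p-2)*(p+1)^4 \<ge> p*p^4" using poly pp ppp p4 assms by linarith
  have p0: "p > 0" using assms by simp
  have "1/(p*p^4) \<le> 1/(2*p^4) - 1/(2*(p+1)^4)" by (rule tele_gen[OF p0 _ _ pos]) (use p0 in auto)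
  thus ?thesis by (simp add: eval_nat_numeral)
qed


lemma nb_of_real: "norm (y::complex) \<le> 1 \<Longrightarrow> norm (y * of_real t) \<le> \<bar>t\<bar>"
  unfolding norm_mult norm_of_real by (rule mult_left_le_one_le) auto

lemma expand_bound:
 fixes x :: complex and uu vv ww :: real
 assumes x: "norm x \<le> 1" and uu: "uu \<ge> 0" and vv: "vv \<ge> 0" and ww: "ww \<ge> 0"
 shows "norm ((1 + x * of_real uu) * (1 - x * of_real vv) * (1 - x * of_real ww) - 1)
   \<le> abs (uu - vv - ww) + uu * vv + uu * ww + vv * ww + uu * vv * ww"
proof -
 have e: "(1 + x * of_real uu) * (1 - x * of_real vv) * (1 - x * of_real ww) - 1
   = x * of_real (uu - vv - ww) + x^2 * of_real (vv * ww - uu * vv - uu * ww) + x^3 * of_real (uu * vv * ww)"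
  by (simp add: algebra_simps power2_eq_square power3_eq_cube)
 have x2: "norm (x^2) \<le> 1" and x3: "norm (x^3) \<le> 1" using x by (simp_all add: norm_power power_le_one)
 have n1: "norm (x * of_real (uu - vv - ww)) \<le> \<bar>uu - vv - ww\<bar>"
  using x by (rule nb_of_real)
 have n2: "norm (x^2 * of_real (vv * ww - uu * vv - uu * ww)) \<le> \<bar>vv * ww - uu * vv - uu * ww\<bar>"
  using x2 by (rule nb_of_real)
 have n3: "norm (x^3 * of_real (uu * vv * ww)) \<le> \<bar>uu * vv * ww\<bar>"
  using x3 by (rule nb_of_real)
 have a2: "\<bar>vv * ww - uu * vv - uu * ww\<bar> \<le> vv * ww + uu * vv + uu * ww" using uu vv ww by (simp add: abs_le_iff)
 have a3: "\<bar>uu * vv * ww\<bar> = uu * vv * ww" using uu vv ww by simp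
 have "norm (x * of_real (uu - vv - ww) + x^2 * of_real (vv * ww - uu * vv - uu * ww) + x^3 * of_real (uu * vv * ww))
   \<le> norm (x * of_real (uu - vv - ww)) + norm (x^2 * of_real (vv * ww - uu * vv - uu * ww)) + norm (x^3 * of_real (uu * vv * ww))"
  by (rule order_trans[OF norm_triangle_ineq add_right_mono[OF norm_triangle_ineq]])
 thus ?thesis unfolding e using n1 n2 n3 a2 a3 by linarith
qed

definition cond :: "nat \<Rightarrow> nat \<Rightarrow> bool" where
  "cond r p \<longleftrightarrow> (r = 1 \<and> p \<ge> 5) \<or> (r = 2 \<and> p \<ge> 3)"

lemma cond_mono: "cond r p \<Longrightarrow> p \<le> p' \<Longrightarrow> cond r p'"
  unfolding cond_def by auto

lemma sharp_nat:
  assumes c: "cond r p"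
  defines "Q \<equiv> real p ^ r"
  defines "D \<equiv> real p * Q - Q - 1"
  shows "D > 0 \<and> \<bar>1/(real p*D) - 1/(real p*real p*Q) - 1/(real p*real p*real p*Q)\<bar> + 1/(real p*D)*(1/(real p*real p*Q))
     + 1/(real p*D)*(1/(real p*real p*real p*Q)) + 1/(real p*real p*Q)*(1/(real p*real p*real p*Q))
     + 1/(real p*D)*(1/(real p*real p*Q))*(1/(real p*real p*real p*Q)) \<le> 1/real p^(r+3)"
proof -
  have p2: "p \<ge> 2" and r1: "r \<ge> 1" using c unfolding cond_def by auto
  have Dg: "D \<ge> real p / 2" unfolding D_def Q_def by (rule D_ge[OF p2 r1])
  have Dpos: "D > 0" using Dg p2 by simp
  have Q2: "Q \<ge> 2"
  proof -
    have a: "real p ^ r \<ge> real p" by (rule pow_ge[OF p2 r1])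
    have b: "real p \<ge> 2" using p2 by simp
    show ?thesis unfolding Q_def using a b by linarith
  qed
  have K: "real p*real p*real p*Q = real p^(r+3)" unfolding Q_def by (simp add: eval_nat_numeral)
  have H: "(Q + real p + 4)/D + 1/(real p*real p*Q) \<le> 1"
  proof (cases "r = 1")
    case True
    hence p5: "real p \<ge> 5" using c unfolding cond_def by auto
    show ?thesis using H_r1[OF p5] True unfolding D_def Q_def by (simp add: add.commute)
  next
    case False
    hence r2: "r = 2" and p3: "real p \<ge> 3" using c unfolding cond_def by auto
    show ?thesis using H_r2[OF p3] r2 unfolding D_def Q_def by (simp add: add.commute power2_eq_square)
  qed
  show ?thesis using sharp_real[OF _ Q2 D_def[THEN meta_eq_to_obj_eq] Dpos H] p2 Dpos unfolding K by simp
qed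

lemma sharp_PF:
 assumes d: "dirichlet_character q chi" and c: "cond r p"
 shows "norm (PF chi r p - 1) \<le> 1/real p^(r+3)"
proof -
 define Q where "Q = real p ^ r"
 define D where "D = real p * Q - Q - 1"
 define uu where "uu = 1/(real p * D)"
 define vv where "vv = 1/(real p * real p * Q)"
 define ww where "ww = 1/(real p * real p * real p * Q)"
 note S = sharp_nat[OF c, folded Q_def, folded D_def]
 have p2: "p \<ge> 2" using c unfolding cond_def by auto
 have Dpos: "D > 0" using S by blast
 have Q0: "Q > 0" unfolding Q_def using p2 by simp
 have x: "norm (chi p) \<le> 1" by (rule chi_norm_le1[OF d])
 have eu: "chi p / (of_nat p * (of_nat p ^ (r + 1) - of_nat p ^ r - 1)) = chi p * of_real uu"
 proof -
  have "(of_nat p * (of_nat p ^ (r + 1) - of_nat p ^ r - 1) :: complex) = of_real (real p * D)"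
   unfolding D_def Q_def by simp
  thus ?thesis unfolding uu_def by (simp add: divide_inverse)
 qed
 have ev: "chi p / of_nat p ^ (r + 2) = chi p * of_real vv"
 proof -
  have "(of_nat p ^ (r + 2) :: complex) = of_real (real p * real p * Q)"
   unfolding Q_def by (simp add: eval_nat_numeral)
  thus ?thesis unfolding vv_def by (simp add: divide_inverse)
 qed
 have ew: "chi p / of_nat p ^ (r + 3) = chi p * of_real ww"
 proof -
  have "(of_nat p ^ (r + 3) :: complex) = of_real (real p * real p * real p * Q)"
   unfolding Q_def by (simp add: eval_nat_numeral)
  thus ?thesis unfolding ww_def by (simp add: divide_inverse)
 qed
 have "norm (PF chi r p - 1) \<le> abs (uu - vv - ww) + uu * vv + uu * ww + vv * ww + uu * vv * ww"
  unfolding PF_def eu ev ew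
  by (rule expand_bound[OF x]) (use Dpos Q0 p2 in \<open>auto simp: uu_def vv_def ww_def\<close>)
 also have "\<dots> \<le> 1/real p^(r+3)" using S unfolding uu_def vv_def ww_def by blast
 finally show ?thesis .
qed

definition gt :: "nat \<Rightarrow> nat \<Rightarrow> real" where
  "gt r p = 1 / (2 * real p ^ (r + 2))"

lemma gt_tele: assumes c: "cond r p" shows "1/real p^(r+3) \<le> gt r p - gt r (Suc p)"
proof (cases "r = 1")
  case True
  hence p5: "real p \<ge> 5" using c unfolding cond_def by auto
  have e: "r + 3 = 4" "r + 2 = 3" using True by simp_all
  show ?thesis unfolding gt_def e of_nat_Suc using tele_r1[OF p5] by (simp add: add.commute)
next
  case False
  hence r2: "r = 2" and p3: "real p \<ge> 3" using c unfolding cond_def by auto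
  have e: "r + 3 = 5" "r + 2 = 4" using r2 by simp_all
  show ?thesis unfolding gt_def e of_nat_Suc using tele_r2[OF p3] by (simp add: add.commute)
qed

lemma gt_anti: "0 < a \<Longrightarrow> a \<le> b \<Longrightarrow> gt r b \<le> gt r a"
  unfolding gt_def by (intro divide_left_mono mult_left_mono power_mono mult_pos_pos) auto

lemma gt_nonneg: "gt r p \<ge> 0" unfolding gt_def by simp

lemma prod_upper:
  fixes a :: "nat \<Rightarrow> complex"
  assumes "\<And>i. norm (a i) \<le> b i"
  shows "norm (\<Prod>i\<le>N. 1 + a i) \<le> exp (\<Sum>i\<le>N. b i)"
proof -
  have "norm (\<Prod>i\<le>N. 1 + a i) = (\<Prod>i\<le>N. norm (1 + a i))" by (simp add: prod_norm)
  also have "\<dots> \<le> (\<Prod>i\<le>N. exp (b i))"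
  proof (rule prod_mono)
    fix i
    have "norm (1 + a i) \<le> 1 + b i" using norm_triangle_ineq[of 1 "a i"] assms[of i] by simp
    also have "\<dots> \<le> exp (b i)" by (rule exp_ge_add_one_self)
    finally show "0 \<le> norm (1 + a i) \<and> norm (1 + a i) \<le> exp (b i)" by simp
  qed
  also have "\<dots> = exp (\<Sum>i\<le>N. b i)" by (simp add: exp_sum)
  finally show ?thesis .
qed

lemma prod_lower:
  fixes a :: "nat \<Rightarrow> complex"
  assumes ab: "\<And>i. norm (a i) \<le> b i" and b1: "\<And>i. b i \<le> 1"
  shows "1 - (\<Sum>i\<le>N. b i) \<le> norm (\<Prod>i\<le>N. 1 + a i)"
proof (induction N)
  case 0
  show ?case using norm_triangle_ineq2[of 1 "- a 0"] ab[of 0] by (simp add: norm_minus_commute)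
next
  case (Suc N)
  let ?s = "\<Sum>i\<le>N. b i"
  let ?P = "norm (\<Prod>i\<le>N. 1 + a i)"
  have b0: "b i \<ge> 0" for i using ab[of i] norm_ge_zero order_trans by blast
  have s0: "?s \<ge> 0" using b0 by (simp add: sum_nonneg)
  have f: "norm (1 + a (Suc N)) \<ge> 1 - b (Suc N)"
    using norm_triangle_ineq2[of 1 "- a (Suc N)"] ab[of "Suc N"] by (simp add: norm_minus_commute)
  have eq: "norm (\<Prod>i\<le>Suc N. 1 + a i) = ?P * norm (1 + a (Suc N))"
    by (simp add: atMost_Suc norm_mult mult.commute)
  show ?case
  proof (cases "1 - ?s \<ge> 0")
    case True
    have "(1 - ?s) * (1 - b (Suc N)) \<le> ?P * norm (1 + a (Suc N))"
      using Suc.IH f True b1[of "Suc N"] by (intro mult_mono) auto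
    moreover have "1 - (?s + b (Suc N)) \<le> (1 - ?s) * (1 - b (Suc N))"
      using s0 b0[of "Suc N"] by (simp add: algebra_simps)
    ultimately show ?thesis unfolding eq by simp
  next
    case False
    have "1 - (?s + b (Suc N)) \<le> 0" using False b0[of "Suc N"] by simp
    thus ?thesis unfolding eq by (simp add: atMost_Suc) (smt (verit) mult_nonneg_nonneg norm_ge_zero)
  qed
qed


lemma part2:
  assumes d: "dirichlet_character q chi" and r: "r \<ge> 1" and c: "cond r (nth_prime (n + 1))"
  shows "1 - 1 / real (nth_prime (n + 1)) ^ (r + 2) \<le> cmod (E_tail chi r n) \<and>
         cmod (E_tail chi r n) \<le> 1 + 1 / real (nth_prime (n + 1)) ^ (r + 2)"
proof -
  define P0 where "P0 = nth_prime (n + 1)"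
  have P0e: "P0 = enumerate PR n" unfolding P0_def using nth_prime_Suc[of n] by simp
  define f where "f i = PF chi r (enumerate PR (i + n))" for i
  have Et: "E_tail chi r n = prodinf f"
    unfolding E_tail_def P_eq f_def by (simp add: nth_prime_Suc[symmetric] ac_simps)
  have hp: "(\<lambda>k. PF chi r (enumerate PR k)) has_prod prodinf (\<lambda>k. PF chi r (enumerate PR k))"
    using P_hasprod[OF d r] by (rule conjunct1)
  have cp0: "convergent_prod (\<lambda>k. PF chi r (enumerate PR k))"
    using hp by (simp add: has_prod_iff)
  have cp: "convergent_prod f" unfolding f_def
    using convergent_prod_iff_shift[of "\<lambda>k. PF chi r (enumerate PR k)" n] cp0 by simp
  have lim: "(\<lambda>N. \<Prod>i\<le>N. f i) \<longlonglongrightarrow> prodinf f" by (rule convergent_prod_LIMSEQ[OF cp])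
  hence limn: "(\<lambda>N. norm (\<Prod>i\<le>N. f i)) \<longlonglongrightarrow> norm (prodinf f)" by (rule tendsto_norm)
  have ci: "cond r (enumerate PR (i + n))" for i
    using cond_mono[OF c[folded P0_def, unfolded P0e] enum_mono_le[of n "i+n"]] by simp
  define a where "a i = f i - 1" for i
  define b where "b i = 1 / real (enumerate PR (i + n)) ^ (r + 3)" for i
  define G where "G i = gt r (enumerate PR (i + n))" for i
  have ab: "norm (a i) \<le> b i" for i unfolding a_def b_def f_def by (rule sharp_PF[OF d ci])
  have pos: "enumerate PR k \<ge> 2" for k using enum_ge[of k] by simp
  have b1: "b i \<le> 1" for i
  proof -
    have "real (enumerate PR (i + n)) ^ (r + 3) \<ge> 1" using pos[of "i+n"] by (intro one_le_power) simp
    thus ?thesis unfolding b_def by (auto simp: divide_le_eq_1)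
  qed
  have bG: "b i \<le> G i - G (Suc i)" for i
  proof -
    have "b i \<le> gt r (enumerate PR (i + n)) - gt r (Suc (enumerate PR (i + n)))"
      unfolding b_def by (rule gt_tele[OF ci])
    moreover have "gt r (enumerate PR (Suc i + n)) \<le> gt r (Suc (enumerate PR (i + n)))"
      using enum_Suc_ge[of "i + n"] by (intro gt_anti) auto
    ultimately show ?thesis unfolding G_def by simp
  qed
  define S where "S = gt r P0"
  have sumb: "(\<Sum>i\<le>N. b i) \<le> S" for N
  proof -
    have "(\<Sum>i\<le>N. b i) \<le> (\<Sum>i\<le>N. G i - G (Suc i))" by (intro sum_mono bG)
    also have "\<dots> = G 0 - G (Suc N)" by (rule sum_telescope)
    also have "\<dots> \<le> G 0" unfolding G_def using gt_nonneg by simp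
    finally show ?thesis unfolding S_def G_def P0e by simp
  qed
  have fa: "(\<Prod>i\<le>N. f i) = (\<Prod>i\<le>N. 1 + a i)" for N unfolding a_def by simp
  have lo: "1 - S \<le> norm (\<Prod>i\<le>N. f i)" for N
    using prod_lower[where a=a and b=b and N=N, OF ab b1] sumb[of N] unfolding fa by linarith
  have up: "norm (\<Prod>i\<le>N. f i) \<le> exp S" for N
    using prod_upper[where a=a and b=b and N=N, OF ab] sumb[of N] unfolding fa by (meson exp_le_cancel_iff order_trans)
  have L1: "1 - S \<le> norm (prodinf f)" by (rule LIMSEQ_le_const[OF limn]) (use lo in blast)
  have L2: "norm (prodinf f) \<le> exp S" by (rule LIMSEQ_le_const2[OF limn]) (use up in blast)
  have Pp: "real P0 ^ (r + 2) \<ge> 1" using pos[of n] P0e by (intro one_le_power) simp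
  have S2: "2 * S = 1 / real P0 ^ (r + 2)" unfolding S_def gt_def by simp
  have S0: "S \<ge> 0" unfolding S_def by (rule gt_nonneg)
  have "1 / real P0 ^ (r + 2) \<le> 1" using Pp by (auto simp: divide_le_eq_1)
  hence Sh: "S \<le> 1/2" using S2 by linarith
  have "exp S \<le> 1 + 2 * S" by (rule real_exp_bound_lemma[OF S0 Sh])
  hence U: "norm (prodinf f) \<le> 1 + 1 / real P0 ^ (r + 2)" using L2 S2 by linarith
  have "1 - 1 / real P0 ^ (r + 2) \<le> 1 - S" using S2 S0 by linarith
  hence "1 - 1 / real P0 ^ (r + 2) \<le> norm (prodinf f)" using L1 by linarith
  with U show ?thesis unfolding Et P0_def by simp
qed

theorem theorem5p1:
  fixes chi :: "nat \<Rightarrow> complex" and q r n :: nat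
  assumes "dirichlet_character q chi" and "r \<ge> 1" and "n \<ge> 1"
  shows "B_chi chi r = E_tail chi r n * Lambda_const chi r * (\<Prod>k=1..n. P_factor chi r k)
    \<and> ((r = 1 \<and> nth_prime (n + 1) \<ge> 5) \<or> (r = 2 \<and> nth_prime (n + 1) \<ge> 3) \<longrightarrow>
         1 - 1 / real (nth_prime (n + 1)) ^ (r + 2) \<le> cmod (E_tail chi r n) \<and>
         cmod (E_tail chi r n) \<le> 1 + 1 / real (nth_prime (n + 1)) ^ (r + 2))"
proof (intro conjI impI)
  show "B_chi chi r = E_tail chi r n * Lambda_const chi r * (\<Prod>k=1..n. P_factor chi r k)"
    by (rule part1'[OF assms(1,2)])
next
  assume h: "(r = 1 \<and> nth_prime (n + 1) \<ge> 5) \<or> (r = 2 \<and> nth_prime (n + 1) \<ge> 3)"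
  hence c: "cond r (nth_prime (n + 1))" unfolding cond_def .
  note P = part2[OF assms(1,2) c]
  show "1 - 1 / real (nth_prime (n + 1)) ^ (r + 2) \<le> cmod (E_tail chi r n)" using P by blast
  show "cmod (E_tail chi r n) \<le> 1 + 1 / real (nth_prime (n + 1)) ^ (r + 2)" using P by blast
qed


end
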